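(* For every equidistributed infinite permutation $\alpha$ and every $n\ge1$, $p_{\alpha}(n)\geq n$.
   Context: An infinite permutation is an equivalence class of sequences $(a[n])_{n\ge0}$ of pairwise distinct reals, where two sequences are equivalent if $a[i]<a[j]\iff b[i]<b[j]$ for all $i,j$; write $\alpha=(\alpha[n])_{n\ge0}$ with the induced order. A factor of length $n$ is $\alpha[i..i+n-1]$ regarded as a finite permutation (relative order of its elements), independent of position; $p_\alpha(n)$ is the number of distinct factors of length $n$. A sequence $(a[n])$ in $[0,1]$ is equidistributed if $\lim_{n\to\infty}\frac{\#\{0\le i<n:a[i]<t\}}{n}=t$ for each $t\in[0,1]$; a permutation is equidistributed if it has an equidistributed representative in $[0,1]$. *)

theory Defs
  imports Complex_Main
begin

text \<open>An infinite permutation is represented by any representative sequence of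
pairwise distinct reals; two representatives are equivalent if they induce the same order.\<close>

definition order_equiv :: "(nat \<Rightarrow> real) \<Rightarrow> (nat \<Rightarrow> real) \<Rightarrow> bool" where
  "order_equiv a b \<longleftrightarrow> (\<forall>i j. a i < a j \<longleftrightarrow> b i < b j)"

text \<open>Factor of length n at position i, as a finite permutation: the relative order
of a[i], ..., a[i+n-1], encoded as the set of pairs (j,k) with j,k < n and a[i+j] < a[i+k].\<close>

definition factor :: "(nat \<Rightarrow> real) \<Rightarrow> nat \<Rightarrow> nat \<Rightarrow> (nat \<times> nat) set" where
  "factor a i n = {(j, k). j < n \<and> k < n \<and> a (i + j) < a (i + k)}"

definition factor_complexity :: "(nat \<Rightarrow> real) \<Rightarrow> nat \<Rightarrow> nat" where
  "factor_complexity a n = card {factor a i n | i. True}"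

definition equidistributed_seq :: "(nat \<Rightarrow> real) \<Rightarrow> bool" where
  "equidistributed_seq a \<longleftrightarrow> (\<forall>n. a n \<in> {0..1}) \<and>
     (\<forall>t\<in>{0..1}. (\<lambda>n. real (card {i. i < n \<and> a i < t}) / real n) \<longlonglongrightarrow> t)"

definition equidistributed_perm :: "(nat \<Rightarrow> real) \<Rightarrow> bool" where
  "equidistributed_perm a \<longleftrightarrow> (\<exists>b. inj b \<and> order_equiv a b \<and> equidistributed_seq b)"

end

theory Submission
  imports Defs
begin

definition PF :: "(nat \<Rightarrow> real) \<Rightarrow> nat \<Rightarrow> (nat \<times> nat) set set" where
  "PF a k = {factor a i k | i. True}"

lemma finite_PF: "finite (PF a k)"
proof -
  have "PF a k \<subseteq> Pow ({..<k} \<times> {..<k})"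
    unfolding PF_def factor_def by auto
  then show ?thesis by (rule finite_subset) auto
qed

lemma card_PF_pos: "card (PF a k) \<ge> 1"
proof -
  have "factor a 0 k \<in> PF a k" unfolding PF_def by auto
  then have "PF a k \<noteq> {}" by auto
  then show ?thesis using finite_PF[of a k] by (simp add: Suc_le_eq card_gt_0_iff)
qed

lemma restr_factor: "factor a i (Suc m) \<inter> ({..<m} \<times> {..<m}) = factor a i m"
  unfolding factor_def by auto

lemma shift_factor: "factor a (Suc i) m = {(j,k). (Suc j, Suc k) \<in> factor a i (Suc m)}"
  unfolding factor_def by auto

lemma comb:
  assumes "factor_complexity a n < n"
  shows "\<exists>N T. T \<ge> 1 \<and> (\<forall>i\<ge>N. (a i < a (i+T)) = (a (i+T) < a (i+T+T)))"
proof -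
  have pn: "card (PF a n) < n" using assms unfolding factor_complexity_def PF_def by simp
  have n2: "n \<ge> 2" using pn card_PF_pos[of a n] by linarith
  define m where "m = (LEAST k. 1 \<le> k \<and> card (PF a (Suc k)) \<le> k)"
  have ex: "1 \<le> n - 1 \<and> card (PF a (Suc (n - 1))) \<le> n - 1" using n2 pn
    by (simp add: Suc_diff_1 del: One_nat_def) linarith
  have m1: "1 \<le> m \<and> card (PF a (Suc m)) \<le> m"
    unfolding m_def by (rule LeastI[of _ "n - 1"], rule ex)
  have mle: "card (PF a (Suc m)) \<le> card (PF a m)"
  proof (cases "m = 1")
    case True
    then show ?thesis using m1 card_PF_pos[of a m] by simp
  next
    case False
    then have "m - 1 < m" "1 \<le> m - 1" using m1 by auto
    have "\<not> (1 \<le> m - 1 \<and> card (PF a (Suc (m - 1))) \<le> m - 1)"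
      using \<open>m - 1 < m\<close> unfolding m_def by (rule not_less_Least)
    then have "card (PF a m) \<ge> m" using \<open>1 \<le> m - 1\<close> m1 by (simp add: Suc_diff_1)
    then show ?thesis using m1 by linarith
  qed
  define R where "R = (\<lambda>F::(nat\<times>nat) set. F \<inter> ({..<m} \<times> {..<m}))"
  have img: "R ` PF a (Suc m) = PF a m"
    unfolding R_def PF_def using restr_factor by (auto simp: image_iff) (metis restr_factor)
  have "card (PF a (Suc m)) \<le> card (PF a m)" by (rule mle)
  moreover have "card (R ` PF a (Suc m)) \<le> card (PF a (Suc m))" by (rule card_image_le[OF finite_PF])
  ultimately have "card (R ` PF a (Suc m)) = card (PF a (Suc m))" using img by simp
  then have inj: "inj_on R (PF a (Suc m))" by (rule eq_card_imp_inj_on[OF finite_PF])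
  define W where "W = (\<lambda>i. factor a i (Suc m))"
  have Win: "W i \<in> PF a (Suc m)" for i unfolding W_def PF_def by auto
  have det: "W i = W j" if "factor a i m = factor a j m" for i j
  proof -
    have "R (W i) = R (W j)" unfolding R_def W_def using that restr_factor by metis
    then show ?thesis using inj Win by (meson inj_onD)
  qed
  have step: "W (Suc i) = W (Suc j)" if "W i = W j" for i j
  proof -
    have "factor a (Suc i) m = factor a (Suc j) m"
      using that unfolding W_def by (simp add: shift_factor)
    then show ?thesis by (rule det)
  qed
  have "W ` {..m} \<subseteq> PF a (Suc m)" using Win by auto
  then have "card (W ` {..m}) \<le> card (PF a (Suc m))" by (rule card_mono[OF finite_PF])
  then have "card (W ` {..m}) < card {..m}" using m1 by simp
  then have "\<not> inj_on W {..m}" by (rule pigeonhole)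
  then obtain x y where xy: "x \<le> m" "y \<le> m" "x \<noteq> y" "W x = W y"
    unfolding inj_on_def by auto
  obtain N T where NT: "T \<ge> 1" "T \<le> m" "W N = W (N + T)"
  proof (cases "x < y")
    case True
    then show ?thesis using that[of "y - x" x] xy by auto
  next
    case False
    then show ?thesis using that[of "x - y" y] xy by auto
  qed
  have per: "W (N + k) = W (N + T + k)" for k
  proof (induction k)
    case 0 then show ?case using NT by simp
  next
    case (Suc k) then show ?case using step[of "N+k" "N+T+k"] by simp
  qed
  have "\<forall>i\<ge>N. (a i < a (i+T)) = (a (i+T) < a (i+T+T))"
  proof (intro allI impI)
    fix i assume "N \<le> i"
    then obtain k where k: "i = N + k" by (metis le_Suc_ex)
    have eq: "W i = W (i + T)" using per[of k] k by (simp add: add.commute add.left_commute)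
    have "(0, T) \<in> W i \<longleftrightarrow> a i < a (i+T)" unfolding W_def factor_def using NT by auto
    moreover have "(0, T) \<in> W (i+T) \<longleftrightarrow> a (i+T) < a (i+T+T)" unfolding W_def factor_def using NT by auto
    ultimately show "(a i < a (i+T)) = (a (i+T) < a (i+T+T))" using eq by simp
  qed
  then show ?thesis using NT by blast
qed

lemma analysis:
  fixes b :: "nat \<Rightarrow> real"
  assumes eq: "equidistributed_seq b" and T1: "T \<ge> 1"
    and per: "\<forall>i\<ge>N. (b i < b (i+T)) = (b (i+T) < b (i+T+T))"
  shows False
proof -
  have b01: "\<And>n. b n \<in> {0..1}" and lim: "\<And>t. t \<in> {0..1} \<Longrightarrow>
      (\<lambda>n. real (card {i. i < n \<and> b i < t}) / real n) \<longlonglongrightarrow> t"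
    using eq unfolding equidistributed_seq_def by auto
  define x where "x = (\<lambda>r k. b (N + r + k * T))"
  have conv: "convergent (x r)" for r
  proof -
    have dir: "(x r k < x r (Suc k)) = (x r 0 < x r 1)" for k
    proof (induction k)
      case 0 then show ?case by simp
    next
      case (Suc k)
      have "(x r k < x r (Suc k)) = (x r (Suc k) < x r (Suc (Suc k)))"
        using per[rule_format, of "N + r + k * T"] unfolding x_def
        by (simp add: algebra_simps)
      then show ?case using Suc by simp
    qed
    have "monoseq (x r)"
    proof (cases "x r 0 < x r 1")
      case True
      have "incseq (x r)"
      proof (rule incseq_SucI)
        fix k show "x r k \<le> x r (Suc k)" using dir[of k] True by simp
      qed
      then show ?thesis by (simp add: monoseq_iff)
    next
      case False
      have "decseq (x r)"
      proof (rule decseq_SucI)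
        fix k show "x r (Suc k) \<le> x r k" using dir[of k] False by simp
      qed
      then show ?thesis by (simp add: monoseq_iff)
    qed
    moreover have "Bseq (x r)"
      by (rule BseqI'[of _ 1]) (use b01 in \<open>auto simp: x_def\<close>)
    ultimately show ?thesis using Bseq_monoseq_convergent by blast
  qed
  define c where "c = (\<lambda>r. lim (x r))"
  have xc: "x r \<longlonglongrightarrow> c r" for r using conv[of r] unfolding c_def by (simp add: convergent_LIMSEQ_iff)
  define L where "L = c ` {..<T}"
  have fL: "finite L" unfolding L_def by simp
  have "open ({0<..<1::real} - L)" using fL by (intro open_Diff finite_imp_closed) auto
  moreover have "{0<..<1::real} - L \<noteq> {}"
  proof
    assume "{0<..<1::real} - L = {}"
    then have "{0<..<1::real} \<subseteq> L" by auto
    then have "finite {0<..<1::real}" using fL finite_subset by blast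
    then show False using infinite_Ioo[of "0::real" 1] by simp
  qed
  ultimately obtain t0 e where t0: "t0 \<in> {0<..<1::real} - L" and e: "e > 0"
    and ball: "\<And>y. dist y t0 < e \<Longrightarrow> y \<in> {0<..<1::real} - L"
    unfolding open_dist by blast
  define t where "t = t0 - e/2"
  define t' where "t' = t0 + e/2"
  have tt: "t < t'" using e unfolding t_def t'_def by simp
  have seg: "y \<in> {0<..<1::real} - L" if "t \<le> y" "y \<le> t'" for y
    using that e by (intro ball) (auto simp: t_def t'_def dist_real_def)
  have t01: "t \<in> {0..1}" "t' \<in> {0..1}" using seg[of t] seg[of t'] tt by auto
  have ev: "\<forall>\<^sub>F k in sequentially. \<forall>r\<in>{..<T}. \<not> (t \<le> x r k \<and> x r k \<le> t')"
  proof (rule eventually_ball_finite)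
    show "finite {..<T}" by simp
    show "\<forall>r\<in>{..<T}. \<forall>\<^sub>F k in sequentially. \<not> (t \<le> x r k \<and> x r k \<le> t')"
    proof
      fix r assume r: "r \<in> {..<T}"
      then have "c r \<in> L" unfolding L_def by auto
      then have "c r < t \<or> c r > t'" using seg[of "c r"] by force
      then show "\<forall>\<^sub>F k in sequentially. \<not> (t \<le> x r k \<and> x r k \<le> t')"
      proof
        assume "c r < t"
        from order_tendstoD(2)[OF xc this] show ?thesis by eventually_elim auto
      next
        assume "c r > t'"
        from order_tendstoD(1)[OF xc this] show ?thesis by eventually_elim auto
      qed
    qed
  qed
  then obtain K where K: "\<And>k r. k \<ge> K \<Longrightarrow> r < T \<Longrightarrow> \<not> (t \<le> x r k \<and> x r k \<le> t')"
    unfolding eventually_sequentially by blast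
  define M where "M = N + K * T"
  have out: "\<not> (t \<le> b i \<and> b i \<le> t')" if "i \<ge> M" for i
  proof -
    define r where "r = (i - N) mod T"
    define k where "k = (i - N) div T"
    have "N \<le> i" using that M_def by simp
    have i: "i = N + r + k * T" unfolding r_def k_def
      using mod_div_mult_eq[of "i-N" T] \<open>N \<le> i\<close> by simp
    have "K * T \<le> i - N" using that M_def by simp
    then have "(K * T) div T \<le> (i - N) div T" by (rule div_le_mono)
    then have "K \<le> k" unfolding k_def using T1 by simp
    moreover have "r < T" unfolding r_def using T1 by simp
    ultimately show ?thesis using K[of k r] i unfolding x_def by simp
  qed
  define C where "C = (\<lambda>s n. real (card {i. i < n \<and> b i < s}))"
  have Cle: "C t' n \<le> C t n + real M" for n
  proof -
    have "{i. i < n \<and> b i < t'} \<subseteq> {i. i < n \<and> b i < t} \<union> {..<M}"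
      using out by (fastforce simp: not_le)
    then have "card {i. i < n \<and> b i < t'} \<le> card ({i. i < n \<and> b i < t} \<union> {..<M})"
      by (intro card_mono) auto
    also have "\<dots> \<le> card {i. i < n \<and> b i < t} + card {..<M}" by (rule card_Un_le)
    finally show ?thesis unfolding C_def by simp
  qed
  have "(\<lambda>n. C t' n / real n) \<longlonglongrightarrow> t'" using lim[OF t01(2)] unfolding C_def .
  moreover have "(\<lambda>n. C t n / real n + real M / real n) \<longlonglongrightarrow> t + 0"
    using lim[OF t01(1)] unfolding C_def
    by (intro tendsto_add) (auto intro: lim_const_over_n)
  moreover have "C t' n / real n \<le> C t n / real n + real M / real n" for n
    using Cle[of n] by (simp add: divide_right_mono add_divide_distrib[symmetric])
  ultimately have "t' \<le> t + 0" by (intro LIMSEQ_le) auto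
  then show False using tt by simp
qed

theorem proposition3:
  fixes a :: "nat \<Rightarrow> real" and n :: nat
  assumes "inj a" and "equidistributed_perm a" and "n \<ge> 1"
  shows "factor_complexity a n \<ge> n"
proof (rule ccontr)
  assume "\<not> factor_complexity a n \<ge> n"
  then obtain N T where NT: "T \<ge> 1" "\<forall>i\<ge>N. (a i < a (i+T)) = (a (i+T) < a (i+T+T))"
    using comb[of a n] by auto
  obtain b where b: "order_equiv a b" "equidistributed_seq b"
    using assms(2) unfolding equidistributed_perm_def by blast
  have "\<forall>i\<ge>N. (b i < b (i+T)) = (b (i+T) < b (i+T+T))"
    using NT(2) b(1) unfolding order_equiv_def by blast
  then show False using analysis[OF b(2) NT(1)] by blast
qed

end
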